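(* Let $k$ be an infinite field. For each $i\in\mathbb{Z}$ let $M_i$ and $N_i$ be square matrices over $k$ of trace zero, of sizes $m_i$ and $n_i$ respectively. Then one can choose square matrices $p_i,q_i$ (of size $m_i$) and $s_i,t_i$ (of size $n_i$) over $k$, for all $i\in\mathbb{Z}$, such that for every $i$: (A1) $M_i=p_iq_i-q_ip_i$; (A2) $N_i=s_it_i-t_is_i$; (A3) $p_i\otimes I_{n_i}-I_{m_i}\otimes s_i^T$ is invertible; (A4) $q_{i+1}\otimes I_{m_i}-I_{m_{i+1}}\otimes q_i^T$ is invertible; (A5) $s_i\otimes I_{m_{i+1}}-I_{n_i}\otimes p_{i+1}^T$ is invertible.
   Context: $I_k$ is the $k\times k$ identity matrix, $\otimes$ is the Kronecker (tensor) product of matrices, $M^T$ is the transpose. By convention the empty $0\times 0$ matrix is invertible (sizes $m_i,n_i$ may be $0$). *)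

theory Defs
  imports "Jordan_Normal_Form.Matrix"
begin

definition mat_trace :: "'a :: comm_ring_1 mat \<Rightarrow> 'a" where
  "mat_trace A = (\<Sum>i<dim_row A. A $$ (i, i))"

definition kron :: "'a :: comm_ring_1 mat \<Rightarrow> 'a mat \<Rightarrow> 'a mat" where
  "kron A B = mat (dim_row A * dim_row B) (dim_col A * dim_col B)
     (\<lambda>(i, j). A $$ (i div dim_row B, j div dim_col B) * B $$ (i mod dim_row B, j mod dim_col B))"

end

theory Submission
  imports Defs "Jordan_Normal_Form.Char_Poly"
begin

lemma mat_trace_mult_comm:
  fixes A B :: "'a::comm_ring_1 mat"
  assumes A: "A \<in> carrier_mat nr nc" and B: "B \<in> carrier_mat nc nr"
  shows "mat_trace (A * B) = mat_trace (B * A)"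
proof -
  have "mat_trace (A * B) = (\<Sum>i<nr. \<Sum>k<nc. A $$ (i,k) * B $$ (k,i))"
    unfolding mat_trace_def using A B
    by (auto intro!: sum.cong simp: scalar_prod_def atLeast0LessThan)
  also have "\<dots> = (\<Sum>k<nc. \<Sum>i<nr. B $$ (k,i) * A $$ (i,k))"
    by (subst sum.swap) (simp add: mult.commute)
  also have "\<dots> = mat_trace (B * A)"
    unfolding mat_trace_def using A B
    by (auto intro!: sum.cong simp: scalar_prod_def atLeast0LessThan)
  finally show ?thesis .
qed

lemma det_imp_inverse:
  fixes A :: "'a::field mat"
  assumes A: "A \<in> carrier_mat n n" and d: "det A \<noteq> 0"
  shows "\<exists>B. B \<in> carrier_mat n n \<and> A * B = 1\<^sub>m n \<and> B * A = 1\<^sub>m n"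
  using det_non_zero_imp_unit[OF A d, of undefined]
  unfolding Units_def ring_mat_def by auto

lemma det_imp_invertible:
  fixes A :: "'a::field mat"
  assumes A: "A \<in> carrier_mat n n" and d: "det A \<noteq> 0"
  shows "invertible_mat A"
  using det_imp_inverse[OF A d] A
  unfolding invertible_mat_def inverts_mat_def square_mat.simps by auto

lemma finite_bad:
  fixes A :: "'a::field mat"
  assumes A: "A \<in> carrier_mat n n"
  shows "finite {e. det (A + e \<cdot>\<^sub>m 1\<^sub>m n) = 0}"
proof -
  have nz: "char_poly A \<noteq> 0" using degree_monic_char_poly[OF A] by auto
  have key: "det (A + e \<cdot>\<^sub>m 1\<^sub>m n) = 0 \<longleftrightarrow> poly (char_poly A) (-e) = 0" for e
  proof -
    have "char_matrix A (-e) = A + e \<cdot>\<^sub>m 1\<^sub>m n" unfolding char_matrix_def using A by simp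
    then show ?thesis using eigenvalue_root_char_poly[OF A, of "-e"] eigenvalue_det[OF A, of "-e"]
      by simp
  qed
  have "{e. det (A + e \<cdot>\<^sub>m 1\<^sub>m n) = 0} \<subseteq> uminus ` {x. poly (char_poly A) x = 0}"
  proof
    fix e assume "e \<in> {e. det (A + e \<cdot>\<^sub>m 1\<^sub>m n) = 0}"
    then have "-e \<in> {x. poly (char_poly A) x = 0}" using key by simp
    then show "e \<in> uminus ` {x. poly (char_poly A) x = 0}" by (rule rev_image_eqI) simp
  qed
  then show ?thesis using poly_roots_finite[OF nz] finite_subset by blast
qed
definition comm :: "nat \<Rightarrow> 'a::comm_ring_1 mat \<Rightarrow> bool" where
  "comm n M = (\<exists>p q. p \<in> carrier_mat n n \<and> q \<in> carrier_mat n n \<and> M = p * q - q * p)"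

lemma comm_conj:
  fixes M X Y :: "'a::comm_ring_1 mat"
  assumes X: "X \<in> carrier_mat n n" and Y: "Y \<in> carrier_mat n n"
    and XY: "X * Y = 1\<^sub>m n" and YX: "Y * X = 1\<^sub>m n" and M: "M \<in> carrier_mat n n"
    and c: "comm n (X * M * Y)"
  shows "comm n M"
proof -
  from c obtain p q where p: "p \<in> carrier_mat n n" and q: "q \<in> carrier_mat n n"
    and e: "X * M * Y = p * q - q * p" unfolding comm_def by auto
  have XYZ: "X * (Y * Z) = Z" if "Z \<in> carrier_mat n nc" for Z nc
    using that X Y XY by (simp add: assoc_mult_mat[symmetric, of X n n Y n Z nc])
  have YXZ: "Y * (X * Z) = Z" if "Z \<in> carrier_mat n nc" for Z nc
    using that X Y YX by (simp add: assoc_mult_mat[symmetric, of Y n n X n Z nc])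
  have "M = Y * (X * M * Y) * X"
    using X Y M YXZ[OF M] YX by (simp add: assoc_mult_mat[of _ n n _ n _ n])
  also have "\<dots> = Y * (p * q) * X - Y * (q * p) * X"
    unfolding e using X Y p q
    by (simp add: mult_minus_distrib_mat[OF Y, of "p*q" n "q*p"] minus_mult_distrib_mat[of "Y*(p*q)" n n "Y*(q*p)" X n])
  also have "Y * (p * q) * X = (Y * p * X) * (Y * q * X)"
  proof -
    have "(Y * p * X) * (Y * q * X) = Y * (p * (X * (Y * (q * X))))"
      using X Y p q by (simp add: assoc_mult_mat[of _ n n _ n _ n])
    also have "X * (Y * (q * X)) = q * X" using XYZ[of "q * X" n] q X by simp
    also have "Y * (p * (q * X)) = Y * (p * q) * X"
      using X Y p q by (simp add: assoc_mult_mat[of _ n n _ n _ n])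
    finally show ?thesis by (rule sym)
  qed
  also have "Y * (q * p) * X = (Y * q * X) * (Y * p * X)"
  proof -
    have "(Y * q * X) * (Y * p * X) = Y * (q * (X * (Y * (p * X))))"
      using X Y p q by (simp add: assoc_mult_mat[of _ n n _ n _ n])
    also have "X * (Y * (p * X)) = p * X" using XYZ[of "p * X" n] p X by simp
    also have "Y * (q * (p * X)) = Y * (q * p) * X"
      using X Y p q by (simp add: assoc_mult_mat[of _ n n _ n _ n])
    finally show ?thesis by (rule sym)
  qed
  finally have "M = (Y * p * X) * (Y * q * X) - (Y * q * X) * (Y * p * X)" .
  then show ?thesis unfolding comm_def using X Y p q
    by (intro exI[of _ "Y * p * X"] exI[of _ "Y * q * X"]) auto
qed

lemma comm_transpose:
  fixes M :: "'a::comm_ring_1 mat"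
  assumes c: "comm n (transpose_mat M)" and M: "M \<in> carrier_mat n n"
  shows "comm n M"
proof -
  from c obtain p q where p: "p \<in> carrier_mat n n" and q: "q \<in> carrier_mat n n"
    and e: "transpose_mat M = p * q - q * p" unfolding comm_def by auto
  have "M = transpose_mat (transpose_mat M)" by simp
  also have "\<dots> = transpose_mat q * transpose_mat p - transpose_mat p * transpose_mat q"
    unfolding e using p q by (simp add: transpose_minus[of _ n n] transpose_mult[of _ n n])
  finally show ?thesis unfolding comm_def using p q
    by (intro exI[of _ "transpose_mat q"] exI[of _ "transpose_mat p"]) auto
qed

definition tv :: "nat \<Rightarrow> nat \<Rightarrow> nat \<Rightarrow> 'a::comm_ring_1 \<Rightarrow> 'a mat" where
  "tv n r c t = mat n n (\<lambda>(a,b). if a = b then 1 else if a = r \<and> b = c then t else 0)"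

lemma tv_carrier[simp]: "tv n r c t \<in> carrier_mat n n"
  unfolding tv_def by simp

lemma tv_left:
  assumes rc: "r \<noteq> c" "c < n" and M: "M \<in> carrier_mat n nc" and ab: "a < n" "b < nc"
  shows "(tv n r c t * M) $$ (a,b) = M $$ (a,b) + (if a = r then t * M $$ (c,b) else 0)"
proof -
  have "(tv n r c t * M) $$ (a,b) = (\<Sum>k\<in>{0..<n}. tv n r c t $$ (a,k) * M $$ (k,b))"
    using M ab by (simp add: scalar_prod_def tv_def)
  also have "\<dots> = (\<Sum>k\<in>{0..<n}. (if k = a then M $$ (a,b) else 0)
      + (if k = c then (if a = r then t * M $$ (c,b) else 0) else 0))"
    using rc ab by (intro sum.cong refl) (auto simp: tv_def)
  also have "\<dots> = M $$ (a,b) + (if a = r then t * M $$ (c,b) else 0)"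
    using rc ab by (simp add: sum.distrib)
  finally show ?thesis .
qed

lemma tv_right:
  assumes rc: "r \<noteq> c" "r < n" and M: "M \<in> carrier_mat nr n" and ab: "a < nr" "b < n"
  shows "(M * tv n r c t) $$ (a,b) = M $$ (a,b) + (if b = c then t * M $$ (a,r) else 0)"
proof -
  have "(M * tv n r c t) $$ (a,b) = (\<Sum>k\<in>{0..<n}. M $$ (a,k) * tv n r c t $$ (k,b))"
    using M ab by (simp add: scalar_prod_def tv_def)
  also have "\<dots> = (\<Sum>k\<in>{0..<n}. (if k = b then M $$ (a,b) else 0)
      + (if k = r then (if b = c then t * M $$ (a,r) else 0) else 0))"
    using rc ab by (intro sum.cong refl) (auto simp: tv_def)
  also have "\<dots> = M $$ (a,b) + (if b = c then t * M $$ (a,r) else 0)"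
    using rc ab by (simp add: sum.distrib)
  finally show ?thesis .
qed

lemma tv_inv:
  fixes t :: "'a::comm_ring_1"
  assumes rc: "r \<noteq> c" "r < n" "c < n"
  shows "tv n r c t * tv n r c (-t) = 1\<^sub>m n"
proof (rule eq_matI)
  fix a b assume ab: "a < dim_row (1\<^sub>m n :: 'a mat)" "b < dim_col (1\<^sub>m n :: 'a mat)"
  then have ab': "a < n" "b < n" by auto
  show "(tv n r c t * tv n r c (-t)) $$ (a,b) = 1\<^sub>m n $$ (a,b)"
    unfolding tv_left[OF rc(1,3) tv_carrier ab'] using rc ab' by (auto simp: tv_def)
qed (auto simp: tv_def)

lemma mat_trace_conj:
  fixes M X Y :: "'a::comm_ring_1 mat"
  assumes X: "X \<in> carrier_mat n n" and Y: "Y \<in> carrier_mat n n"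
    and YX: "Y * X = 1\<^sub>m n" and M: "M \<in> carrier_mat n n"
  shows "mat_trace (X * M * Y) = mat_trace M"
proof -
  have "mat_trace (X * M * Y) = mat_trace (X * (M * Y))"
    using X Y M by (simp add: assoc_mult_mat[of _ n n _ n _ n])
  also have "\<dots> = mat_trace ((M * Y) * X)"
    using X Y M by (intro mat_trace_mult_comm[of _ n n]) auto
  also have "\<dots> = mat_trace (M * (Y * X))"
    using X Y M by (simp add: assoc_mult_mat[of _ n n _ n _ n])
  also have "\<dots> = mat_trace M" using YX M by simp
  finally show ?thesis .
qed

lemma mat_trace_transpose: "A \<in> carrier_mat n n \<Longrightarrow> mat_trace (transpose_mat A) = mat_trace A"
  unfolding mat_trace_def by (auto intro!: sum.cong)

lemma reduce_col:
  fixes M :: "'a::field mat"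
  assumes M: "M \<in> carrier_mat n n" and j: "0 < j" "j < n" and Mj: "M $$ (j,0) \<noteq> 0"
    and tr: "mat_trace M = 0"
    and corner: "\<And>M' :: 'a mat. M' \<in> carrier_mat n n \<Longrightarrow> mat_trace M' = 0 \<Longrightarrow> M' $$ (0,0) = 0 \<Longrightarrow> comm n M'"
  shows "comm n M"
proof -
  define t where "t = - M $$ (0,0) / M $$ (j,0)"
  define X where "X = (tv n 0 j t :: 'a mat)"
  define Y where "Y = (tv n 0 j (-t) :: 'a mat)"
  have X: "X \<in> carrier_mat n n" and Y: "Y \<in> carrier_mat n n" unfolding X_def Y_def by auto
  have XY: "X * Y = 1\<^sub>m n" unfolding X_def Y_def using j by (intro tv_inv) auto
  have YX: "Y * X = 1\<^sub>m n" unfolding X_def Y_def using j tv_inv[of 0 j n "-t"] by auto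
  have XM: "X * M \<in> carrier_mat n n" using X M by auto
  have "(X * M * Y) $$ (0,0) = (X * M) $$ (0,0)"
    unfolding Y_def using tv_right[of 0 j n "X * M" n 0 0 "-t"] XM j by simp
  also have "\<dots> = M $$ (0,0) + t * M $$ (j,0)"
    unfolding X_def using tv_left[of 0 j n M n 0 0 t] M j by simp
  also have "\<dots> = 0" unfolding t_def using Mj by simp
  finally have e: "(X * M * Y) $$ (0,0) = 0" .
  have XMY: "X * M * Y \<in> carrier_mat n n" using X M Y by auto
  have "comm n (X * M * Y)"
    using corner[OF XMY _ e] mat_trace_conj[OF X Y YX M] tr by simp
  then show ?thesis using comm_conj[OF X Y XY YX M] by simp
qed

lemma reduce_nonscalar:
  fixes M :: "'a::field mat"
  assumes M: "M \<in> carrier_mat n n" and n: "0 < n"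
    and tr: "mat_trace M = 0"
    and ns: "M \<noteq> M $$ (0,0) \<cdot>\<^sub>m 1\<^sub>m n"
    and corner: "\<And>M' :: 'a mat. M' \<in> carrier_mat n n \<Longrightarrow> mat_trace M' = 0 \<Longrightarrow> M' $$ (0,0) = 0 \<Longrightarrow> comm n M'"
  shows "comm n M"
proof -
  consider (col) j where "0 < j" "j < n" "M $$ (j,0) \<noteq> 0"
    | (row) j where "0 < j" "j < n" "M $$ (0,j) \<noteq> 0"
    | (other) "\<forall>j. 0 < j \<and> j < n \<longrightarrow> M $$ (j,0) = 0 \<and> M $$ (0,j) = 0"
  proof -
    assume h1: "\<And>j. 0 < j \<Longrightarrow> j < n \<Longrightarrow> M $$ (j,0) \<noteq> 0 \<Longrightarrow> thesis"
      and h2: "\<And>j. 0 < j \<Longrightarrow> j < n \<Longrightarrow> M $$ (0,j) \<noteq> 0 \<Longrightarrow> thesis"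
      and h3: "\<forall>j. 0 < j \<and> j < n \<longrightarrow> M $$ (j,0) = 0 \<and> M $$ (0,j) = 0 \<Longrightarrow> thesis"
    show thesis
    proof (cases "\<forall>j. 0 < j \<and> j < n \<longrightarrow> M $$ (j,0) = 0 \<and> M $$ (0,j) = 0")
      case True then show ?thesis by (rule h3)
    next
      case False
      then obtain j where j: "0 < j" "j < n" "M $$ (j,0) \<noteq> 0 \<or> M $$ (0,j) \<noteq> 0" by auto
      then show ?thesis using h1[OF j(1,2)] h2[OF j(1,2)] by auto
    qed
  qed
  then show ?thesis
  proof cases
    case col
    show ?thesis by (rule reduce_col[OF M col tr corner])
  next
    case row
    have MT: "transpose_mat M \<in> carrier_mat n n" using M by simp
    have t1: "transpose_mat M $$ (j,0) \<noteq> 0" using row M by simp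
    have t2: "mat_trace (transpose_mat M) = 0" using mat_trace_transpose[OF M] tr by simp
    have "comm n (transpose_mat M)" by (rule reduce_col[OF MT row(1,2) t1 t2 corner])
    then show ?thesis by (rule comm_transpose[OF _ M])
  next
    case other
    obtain a b where ab: "a < n" "b < n" "M $$ (a,b) \<noteq> (M $$ (0,0) \<cdot>\<^sub>m 1\<^sub>m n) $$ (a,b)"
      using ns M by (metis eq_matI carrier_matD index_smult_mat(2,3) index_one_mat(2,3))
    have a0: "a \<noteq> 0"
    proof
      assume a: "a = 0"
      show False
      proof (cases "b = 0")
        case True then show False using ab a by simp
      next
        case False then show False using ab a other by auto
      qed
    qed
    have b0: "b \<noteq> 0"
    proof
      assume b: "b = 0"
      then have "M $$ (a,0) = 0" using other a0 ab by auto
      then show False using ab a0 b by simp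
    qed
    define X where "X = (tv n b 0 1 :: 'a mat)"
    define Y where "Y = (tv n b 0 (-1) :: 'a mat)"
    have X: "X \<in> carrier_mat n n" and Y: "Y \<in> carrier_mat n n" unfolding X_def Y_def by auto
    have XY: "X * Y = 1\<^sub>m n" unfolding X_def Y_def using b0 ab n by (intro tv_inv) auto
    have YX: "Y * X = 1\<^sub>m n" unfolding X_def Y_def using b0 ab n tv_inv[of b 0 n "-1"] by auto
    have XM: "X * M \<in> carrier_mat n n" using X M by auto
    have "(X * M * Y) $$ (a,0) = (X * M) $$ (a,0) - (X * M) $$ (a,b)"
      unfolding Y_def using tv_right[of b 0 n "X * M" n a 0 "-1"] XM ab b0 n by simp
    also have "\<dots> = M $$ (a,0) + (if a = b then M $$ (0,0) else 0)
        - (M $$ (a,b) + (if a = b then M $$ (0,b) else 0))"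
      unfolding X_def using tv_left[of b 0 n M n a 0 1] tv_left[of b 0 n M n a b 1] M ab b0 n by simp
    also have "\<dots> = (if a = b then M $$ (0,0) else 0) - M $$ (a,b)"
      using other a0 b0 ab by auto
    finally have e: "(X * M * Y) $$ (a,0) \<noteq> 0" using ab by auto
    have XMY: "X * M * Y \<in> carrier_mat n n" using X M Y by auto
    have a0': "0 < a" using a0 by simp
    have "comm n (X * M * Y)"
      by (rule reduce_col[OF XMY a0' ab(1) e _ corner]) (simp add: mat_trace_conj[OF X Y YX M] tr)
    then show ?thesis using comm_conj[OF X Y XY YX M] by simp
  qed
qed

lemma scalar_comm:
  fixes \<mu> :: "'a::field"
  assumes tr: "mat_trace (\<mu> \<cdot>\<^sub>m 1\<^sub>m n) = 0"
  shows "comm n (\<mu> \<cdot>\<^sub>m 1\<^sub>m n)"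
proof -
  have nmu: "of_nat n * \<mu> = 0"
    using tr unfolding mat_trace_def by simp
  define P where "P = mat n n (\<lambda>(a,b). if b = Suc a then \<mu> * of_nat b else (0::'a))"
  define Q where "Q = mat n n (\<lambda>(a,b). if a = Suc b then 1 else (0::'a))"
  have P: "P \<in> carrier_mat n n" and Q: "Q \<in> carrier_mat n n" unfolding P_def Q_def by auto
  have PQ: "(P * Q) $$ (a,c) = (if Suc a < n \<and> a = c then \<mu> * of_nat (Suc a) else 0)"
    if ac: "a < n" "c < n" for a c
  proof -
    have "(P * Q) $$ (a,c) = (\<Sum>k\<in>{0..<n}. P $$ (a,k) * Q $$ (k,c))"
      using P Q ac by (simp add: scalar_prod_def)
    also have "\<dots> = (\<Sum>k\<in>{0..<n}. if k = Suc a then (if a = c then \<mu> * of_nat (Suc a) else 0) else 0)"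
      using ac by (intro sum.cong refl) (auto simp: P_def Q_def)
    also have "\<dots> = (if Suc a < n \<and> a = c then \<mu> * of_nat (Suc a) else 0)"
      by (simp add: sum.delta')
    finally show ?thesis .
  qed
  have QP: "(Q * P) $$ (a,c) = (if a = c then \<mu> * of_nat a else 0)"
    if ac: "a < n" "c < n" for a c
  proof -
    have "(Q * P) $$ (a,c) = (\<Sum>k\<in>{0..<n}. Q $$ (a,k) * P $$ (k,c))"
      using P Q ac by (simp add: scalar_prod_def)
    also have "\<dots> = (\<Sum>k\<in>{0..<n}. if k = a - 1 then (if 0 < a \<and> a = c then \<mu> * of_nat a else 0) else 0)"
      using ac by (intro sum.cong refl) (auto simp: P_def Q_def)
    also have "\<dots> = (if 0 < a \<and> a = c then \<mu> * of_nat a else 0)"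
      using ac by (auto simp: sum.delta')
    also have "\<dots> = (if a = c then \<mu> * of_nat a else 0)" by auto
    finally show ?thesis .
  qed
  have "\<mu> \<cdot>\<^sub>m 1\<^sub>m n = P * Q - Q * P"
  proof (rule eq_matI)
    fix a c assume ac: "a < dim_row (P * Q - Q * P)" "c < dim_col (P * Q - Q * P)"
    then have ac': "a < n" "c < n" using P Q by auto
    have "(P * Q - Q * P) $$ (a,c) = (P * Q) $$ (a,c) - (Q * P) $$ (a,c)"
      using ac' P Q by simp
    also have "\<dots> = (\<mu> \<cdot>\<^sub>m 1\<^sub>m n) $$ (a,c)"
    proof (cases "a = c")
      case False then show ?thesis using ac' PQ QP by simp
    next
      case True
      show ?thesis
      proof (cases "Suc a < n")
        case True
        then show ?thesis using ac' PQ[OF ac'] QP[OF ac'] \<open>a = c\<close> by (simp add: algebra_simps)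
      next
        case False
        then have "n = Suc a" using ac' by simp
        then have "\<mu> + \<mu> * of_nat a = 0" using nmu by (simp add: algebra_simps)
        then have "\<mu> * of_nat a = - \<mu>" by (simp add: eq_neg_iff_add_eq_0 add.commute)
        then show ?thesis using ac' PQ[OF ac'] QP[OF ac'] \<open>a = c\<close> False by simp
      qed
    qed
    finally show "(\<mu> \<cdot>\<^sub>m 1\<^sub>m n) $$ (a,c) = (P * Q - Q * P) $$ (a,c)" by simp
  qed (use P Q in auto)
  then show ?thesis unfolding comm_def using P Q
    by (intro exI[of _ P] exI[of _ Q]) auto
qed

lemma minus_four_block_mat: assumes
  c1: "A1 \<in> carrier_mat nr1 nc1" "B1 \<in> carrier_mat nr1 nc2" "C1 \<in> carrier_mat nr2 nc1" "D1 \<in> carrier_mat nr2 nc2" and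
  c2: "A2 \<in> carrier_mat nr1 nc1" "B2 \<in> carrier_mat nr1 nc2" "C2 \<in> carrier_mat nr2 nc1" "D2 \<in> carrier_mat nr2 nc2"
  shows "four_block_mat A1 B1 C1 D1 - four_block_mat A2 B2 C2 D2
  = four_block_mat (A1 - A2) (B1 - B2) (C1 - C2) (D1 - D2)"
  by (rule eq_matI, insert assms, auto)

lemma corner:
  fixes M :: "'a::field mat"
  assumes inf: "infinite (UNIV :: 'a set)"
    and M: "M \<in> carrier_mat (Suc k) (Suc k)" and tr: "mat_trace M = 0" and M00: "M $$ (0,0) = 0"
    and IH: "\<And>M1 :: 'a mat. M1 \<in> carrier_mat k k \<Longrightarrow> mat_trace M1 = 0 \<Longrightarrow> comm k M1"
  shows "comm (Suc k) M"
proof -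
  obtain A B C D where sb: "split_block M 1 1 = (A,B,C,D)" by (cases "split_block M 1 1") auto
  have dims: "dim_row M = 1 + k" "dim_col M = 1 + k" using M by auto
  note blk = split_block[OF sb dims]
  have A: "A \<in> carrier_mat 1 1" and B: "B \<in> carrier_mat 1 k" and C: "C \<in> carrier_mat k 1"
    and D: "D \<in> carrier_mat k k" and Meq: "M = four_block_mat A B C D" using blk by auto
  have Adef: "A = mat 1 1 (\<lambda>ij. M $$ ij)" and Ddef: "D = mat k k (\<lambda>(i,j). M $$ (i+1, j+1))"
    using sb dims unfolding split_block_def Let_def by auto
  have A0: "A = 0\<^sub>m 1 1" unfolding Adef using M00 by (intro eq_matI) auto
  have "mat_trace M = M $$ (0,0) + (\<Sum>i<k. M $$ (Suc i, Suc i))"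
    unfolding mat_trace_def using M by (simp del: sum.lessThan_Suc add: sum.lessThan_Suc_shift)
  moreover have "mat_trace D = (\<Sum>i<k. M $$ (Suc i, Suc i))"
    unfolding mat_trace_def Ddef by simp
  ultimately have trD: "mat_trace D = 0" using tr M00 by simp
  obtain p1 q1 where p1: "p1 \<in> carrier_mat k k" and q1: "q1 \<in> carrier_mat k k"
    and Deq: "D = p1 * q1 - q1 * p1" using IH[OF D trD] unfolding comm_def by auto
  have mp1: "- p1 \<in> carrier_mat k k" using p1 by simp
  have fin: "finite ({e. det (- p1 + e \<cdot>\<^sub>m 1\<^sub>m k) = 0} \<union> uminus ` {e. det (p1 + e \<cdot>\<^sub>m 1\<^sub>m k) = 0})"
    using finite_bad[OF mp1] finite_bad[OF p1] by simp
  obtain e where e: "e \<notin> {e. det (- p1 + e \<cdot>\<^sub>m 1\<^sub>m k) = 0} \<union> uminus ` {e. det (p1 + e \<cdot>\<^sub>m 1\<^sub>m k) = 0}"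
    using ex_new_if_finite[OF inf fin] by blast
  define P1 where "P1 = e \<cdot>\<^sub>m 1\<^sub>m k - p1"
  define Q1 where "Q1 = p1 - e \<cdot>\<^sub>m 1\<^sub>m k"
  have P1c: "P1 \<in> carrier_mat k k" and Q1c: "Q1 \<in> carrier_mat k k"
    unfolding P1_def Q1_def using p1 by auto
  have "P1 = - p1 + e \<cdot>\<^sub>m 1\<^sub>m k" unfolding P1_def using p1 by (intro eq_matI) auto
  then have dP: "det P1 \<noteq> 0" using e by auto
  have "Q1 = p1 + (-e) \<cdot>\<^sub>m 1\<^sub>m k" unfolding Q1_def using p1 by (intro eq_matI) auto
  moreover have "det (p1 + (-e) \<cdot>\<^sub>m 1\<^sub>m k) \<noteq> 0"
  proof
    assume "det (p1 + (-e) \<cdot>\<^sub>m 1\<^sub>m k) = 0"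
    then have "e \<in> uminus ` {e. det (p1 + e \<cdot>\<^sub>m 1\<^sub>m k) = 0}" by (intro rev_image_eqI[of "-e"]) auto
    then show False using e by blast
  qed
  ultimately have dQ: "det Q1 \<noteq> 0" by simp
  obtain W1 where W1: "W1 \<in> carrier_mat k k" and PW1: "P1 * W1 = 1\<^sub>m k" and W1P: "W1 * P1 = 1\<^sub>m k"
    using det_imp_inverse[OF P1c dP] by auto
  obtain W2 where W2: "W2 \<in> carrier_mat k k" and QW2: "Q1 * W2 = 1\<^sub>m k" and W2Q: "W2 * Q1 = 1\<^sub>m k"
    using det_imp_inverse[OF Q1c dQ] by auto
  define X where "X = B * W1"
  define Y where "Y = W2 * C"
  have X: "X \<in> carrier_mat 1 k" and Y: "Y \<in> carrier_mat k 1" unfolding X_def Y_def using B C W1 W2 by auto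
  define p where "p = four_block_mat (e \<cdot>\<^sub>m 1\<^sub>m 1) (0\<^sub>m 1 k) (0\<^sub>m k 1) p1"
  define q where "q = four_block_mat (0\<^sub>m 1 1) X Y q1"
  have pc: "p \<in> carrier_mat (Suc k) (Suc k)" and qc: "q \<in> carrier_mat (Suc k) (Suc k)"
    unfolding p_def q_def using p1 q1 by auto
  have pq: "p * q = four_block_mat (0\<^sub>m 1 1) (e \<cdot>\<^sub>m X) (p1 * Y) (p1 * q1)"
    unfolding p_def q_def
    by (subst mult_four_block_mat[of _ 1 1 _ k _ k _ _ 1 _ k]; (use X Y p1 q1 in \<open>auto simp: mult_smult_assoc_mat[of _ 1 1 _ k]\<close>)?)
  have qp: "q * p = four_block_mat (0\<^sub>m 1 1) (X * p1) (e \<cdot>\<^sub>m Y) (q1 * p1)"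
    unfolding p_def q_def
    by (subst mult_four_block_mat[of _ 1 1 _ k _ k _ _ 1 _ k]; (use X Y p1 q1 in \<open>auto simp: mult_smult_distrib[of _ k 1 _ 1]\<close>)?)
  have TR: "e \<cdot>\<^sub>m X - X * p1 = B"
  proof -
    have "X * P1 = X * (e \<cdot>\<^sub>m 1\<^sub>m k) - X * p1"
      unfolding P1_def by (rule mult_minus_distrib_mat[OF X _ p1]) simp
    also have "X * (e \<cdot>\<^sub>m 1\<^sub>m k) = e \<cdot>\<^sub>m (X * 1\<^sub>m k)"
      by (rule mult_smult_distrib[OF X one_carrier_mat])
    also have "X * 1\<^sub>m k = X" using X by simp
    finally have "e \<cdot>\<^sub>m X - X * p1 = X * P1" by simp
    also have "\<dots> = B * (W1 * P1)" unfolding X_def using B W1 P1c by (simp add: assoc_mult_mat[of _ 1 k _ k _ k])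
    finally show ?thesis using W1P B by simp
  qed
  have BL: "p1 * Y - e \<cdot>\<^sub>m Y = C"
  proof -
    have "Q1 * Y = p1 * Y - (e \<cdot>\<^sub>m 1\<^sub>m k) * Y"
      unfolding Q1_def by (rule minus_mult_distrib_mat[OF p1 _ Y]) simp
    also have "(e \<cdot>\<^sub>m 1\<^sub>m k) * Y = e \<cdot>\<^sub>m (1\<^sub>m k * Y)"
      by (rule mult_smult_assoc_mat[OF one_carrier_mat Y])
    also have "1\<^sub>m k * Y = Y" using Y by simp
    finally have "p1 * Y - e \<cdot>\<^sub>m Y = Q1 * Y" by simp
    also have "\<dots> = (Q1 * W2) * C" unfolding Y_def using C W2 Q1c by (simp add: assoc_mult_mat[of _ k k _ k _ 1])
    finally show ?thesis using QW2 C by simp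
  qed
  have "p * q - q * p = four_block_mat (0\<^sub>m 1 1 - 0\<^sub>m 1 1) (e \<cdot>\<^sub>m X - X * p1) (p1 * Y - e \<cdot>\<^sub>m Y) (p1 * q1 - q1 * p1)"
    unfolding pq qp using X Y p1 q1 by (intro minus_four_block_mat[of _ 1 1 _ k _ k]) auto
  also have "(0\<^sub>m 1 1 - 0\<^sub>m 1 1 :: 'a mat) = 0\<^sub>m 1 1" by (rule eq_matI) auto
  also have "four_block_mat (0\<^sub>m 1 1) (e \<cdot>\<^sub>m X - X * p1) (p1 * Y - e \<cdot>\<^sub>m Y) (p1 * q1 - q1 * p1) = M"
    unfolding TR BL Meq A0 Deq[symmetric] by simp
  finally show ?thesis unfolding comm_def using pc qc
    by (intro exI[of _ p] exI[of _ q]) auto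
qed

lemma comm_exists:
  fixes M :: "'a::field mat"
  assumes inf: "infinite (UNIV :: 'a set)"
  shows "M \<in> carrier_mat n n \<Longrightarrow> mat_trace M = 0 \<Longrightarrow> comm n M"
proof (induction n arbitrary: M)
  case 0
  have "M = 0\<^sub>m 0 0 * 0\<^sub>m 0 0 - 0\<^sub>m 0 0 * 0\<^sub>m 0 0" using 0 by (intro eq_matI) auto
  then show ?case unfolding comm_def by (intro exI[of _ "0\<^sub>m 0 0"]) auto
next
  case (Suc k)
  show ?case
  proof (cases "M = M $$ (0,0) \<cdot>\<^sub>m 1\<^sub>m (Suc k)")
    case True
    have "mat_trace (M $$ (0,0) \<cdot>\<^sub>m 1\<^sub>m (Suc k)) = 0" using Suc.prems(2) True by simp
    then have "comm (Suc k) (M $$ (0,0) \<cdot>\<^sub>m 1\<^sub>m (Suc k))" by (rule scalar_comm)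
    then show ?thesis using True by simp
  next
    case False
    have cor: "comm (Suc k) M'" if "M' \<in> carrier_mat (Suc k) (Suc k)" "mat_trace M' = 0" "M' $$ (0,0) = 0"
      for M' :: "'a mat"
      by (rule corner[OF inf that Suc.IH])
    show ?thesis by (rule reduce_nonscalar[OF Suc.prems(1) _ Suc.prems(2) False cor]) simp_all
  qed
qed

lemma shift_mult_entry:
  fixes A B :: "'a::comm_ring_1 mat"
  assumes A: "A \<in> carrier_mat n n" and B: "B \<in> carrier_mat n n" and ij: "i < n" "j < n"
  shows "((A + a \<cdot>\<^sub>m 1\<^sub>m n) * (B + b \<cdot>\<^sub>m 1\<^sub>m n)) $$ (i,j) = (A * B) $$ (i,j) + b * A $$ (i,j) + a * B $$ (i,j) + (if i = j then a * b else 0)"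
proof -
  have "((A + a \<cdot>\<^sub>m 1\<^sub>m n) * (B + b \<cdot>\<^sub>m 1\<^sub>m n)) $$ (i,j)
     = (\<Sum>k\<in>{0..<n}. (A $$ (i,k) + (if i = k then a else 0)) * (B $$ (k,j) + (if k = j then b else 0)))"
    using A B ij by (auto simp: scalar_prod_def intro!: sum.cong)
  also have "\<dots> = (\<Sum>k\<in>{0..<n}. A $$ (i,k) * B $$ (k,j) + ((if k = j then b * A $$ (i,j) else 0)
      + (if k = i then a * B $$ (i,j) else 0) + (if k = i then (if i = j then a * b else 0) else 0)))"
    by (intro sum.cong refl) (auto simp: algebra_simps)
  also have "\<dots> = (A * B) $$ (i,j) + b * A $$ (i,j) + a * B $$ (i,j) + (if i = j then a * b else 0)"
    using A B ij by (simp add: sum.distrib scalar_prod_def add.assoc)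
  finally show ?thesis .
qed

lemma comm_shift:
  fixes A B :: "'a::comm_ring_1 mat"
  assumes A: "A \<in> carrier_mat n n" and B: "B \<in> carrier_mat n n"
  shows "(A + a \<cdot>\<^sub>m 1\<^sub>m n) * (B + b \<cdot>\<^sub>m 1\<^sub>m n) - (B + b \<cdot>\<^sub>m 1\<^sub>m n) * (A + a \<cdot>\<^sub>m 1\<^sub>m n) = A * B - B * A"
proof (rule eq_matI)
  fix i j assume ij: "i < dim_row (A * B - B * A)" "j < dim_col (A * B - B * A)"
  then have ij': "i < n" "j < n" using A B by auto
  have L: "((A + a \<cdot>\<^sub>m 1\<^sub>m n) * (B + b \<cdot>\<^sub>m 1\<^sub>m n)) $$ (i,j) = (A * B) $$ (i,j) + b * A $$ (i,j) + a * B $$ (i,j) + (if i = j then a * b else 0)"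
    by (rule shift_mult_entry[OF A B ij'])
  have R: "((B + b \<cdot>\<^sub>m 1\<^sub>m n) * (A + a \<cdot>\<^sub>m 1\<^sub>m n)) $$ (i,j) = (B * A) $$ (i,j) + a * B $$ (i,j) + b * A $$ (i,j) + (if i = j then b * a else 0)"
    by (rule shift_mult_entry[OF B A ij'])
  show "((A + a \<cdot>\<^sub>m 1\<^sub>m n) * (B + b \<cdot>\<^sub>m 1\<^sub>m n) - (B + b \<cdot>\<^sub>m 1\<^sub>m n) * (A + a \<cdot>\<^sub>m 1\<^sub>m n)) $$ (i,j) = (A * B - B * A) $$ (i,j)"
    using A B ij' L R by (simp add: algebra_simps)
qed (use A B in auto)

lemma kron_shift:
  fixes A B :: "'a::comm_ring_1 mat"
  assumes A: "A \<in> carrier_mat m m" and B: "B \<in> carrier_mat n n"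
  shows "kron (A + a \<cdot>\<^sub>m 1\<^sub>m m) (1\<^sub>m n) - kron (1\<^sub>m m) (transpose_mat (B + b \<cdot>\<^sub>m 1\<^sub>m n))
    = (kron A (1\<^sub>m n) - kron (1\<^sub>m m) (transpose_mat B)) + (a - b) \<cdot>\<^sub>m 1\<^sub>m (m * n)"
proof (rule eq_matI)
  fix i j assume ij: "i < dim_row ((kron A (1\<^sub>m n) - kron (1\<^sub>m m) (transpose_mat B)) + (a - b) \<cdot>\<^sub>m 1\<^sub>m (m * n))"
    "j < dim_col ((kron A (1\<^sub>m n) - kron (1\<^sub>m m) (transpose_mat B)) + (a - b) \<cdot>\<^sub>m 1\<^sub>m (m * n))"
  then have ij': "i < m * n" "j < m * n" using A B by (auto simp: kron_def)
  then have n0: "0 < n" by (cases n) auto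
  have d: "i div n < m" "j div n < m" using ij' by (auto simp: less_mult_imp_div_less)
  have md: "i mod n < n" "j mod n < n" using n0 by auto
  have eq: "(i = j) = (i div n = j div n \<and> i mod n = j mod n)"
    by (metis div_mult_mod_eq)
  show "(kron (A + a \<cdot>\<^sub>m 1\<^sub>m m) (1\<^sub>m n) - kron (1\<^sub>m m) (transpose_mat (B + b \<cdot>\<^sub>m 1\<^sub>m n))) $$ (i, j) =
       (kron A (1\<^sub>m n) - kron (1\<^sub>m m) (transpose_mat B) + (a - b) \<cdot>\<^sub>m 1\<^sub>m (m * n)) $$ (i, j)"
    using A B ij' d md eq by (auto simp: kron_def algebra_simps)
qed (use A B in \<open>auto simp: kron_def\<close>)

lemma chain:
  fixes F :: "int \<Rightarrow> 'a::ab_group_add set"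
  assumes inf: "infinite (UNIV :: 'a set)" and fin: "\<And>j. finite (F j)"
  shows "\<exists>x. \<forall>j. x (j + 1) - x j \<notin> F j"
proof -
  have "\<forall>j. \<exists>a. a \<notin> F j" using ex_new_if_finite[OF inf fin] by blast
  then obtain d where d: "\<And>j. d j \<notin> F j" by metis
  define x where "x j = (if 0 \<le> j then (\<Sum>l<nat j. d (int l)) else - (\<Sum>l<nat (- j). d (- int l - 1)))" for j
  have "x (j + 1) - x j = d j" for j
  proof (cases "0 \<le> j")
    case True
    then have "nat (j + 1) = Suc (nat j)" by simp
    then show ?thesis using True unfolding x_def by simp
  next
    case False
    define N where "N = nat (- j - 1)"
    have NS: "nat (- j) = Suc N" unfolding N_def using False by simp
    have jN: "j = - int N - 1" unfolding N_def using False by simp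
    have "x (j + 1) = - (\<Sum>l<N. d (- int l - 1))"
    proof (cases "0 \<le> j + 1")
      case True
      then have "N = 0" "j + 1 = 0" unfolding N_def using \<open>\<not> 0 \<le> j\<close> by simp_all
      then show ?thesis unfolding x_def by simp
    next
      case False
      then have "nat (- (j + 1)) = N" unfolding N_def by simp
      then show ?thesis unfolding x_def using False by simp
    qed
    moreover have "x j = - (\<Sum>l<N. d (- int l - 1)) - d (- int N - 1)"
      unfolding x_def using False NS by simp
    ultimately show ?thesis using jN by simp
  qed
  then show ?thesis using d by (intro exI[of _ x]) auto
qed

lemma inv_notbad:
  fixes K :: "'a::field mat"
  assumes K: "K \<in> carrier_mat N N" and d: "d \<notin> {e. det (K + e \<cdot>\<^sub>m 1\<^sub>m N) = 0}"
  shows "invertible_mat (K + d \<cdot>\<^sub>m 1\<^sub>m N)"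
  using d K by (intro det_imp_invertible[of _ N]) auto

lemma neg_notin: "(b::'a::ab_group_add) - a \<notin> uminus ` S \<Longrightarrow> a - b \<notin> S"
proof
  assume "b - a \<notin> uminus ` S" "a - b \<in> S"
  then have "- (a - b) \<in> uminus ` S" by blast
  then show False using \<open>b - a \<notin> uminus ` S\<close> by simp
qed

theorem lemmaA:
  fixes m n :: "int \<Rightarrow> nat" and M N :: "int \<Rightarrow> 'a :: field mat"
  assumes "infinite (UNIV :: 'a set)"
    and "\<forall>i. M i \<in> carrier_mat (m i) (m i) \<and> mat_trace (M i) = 0"
    and "\<forall>i. N i \<in> carrier_mat (n i) (n i) \<and> mat_trace (N i) = 0"
  shows "\<exists>p q s t. \<forall>i.
            p i \<in> carrier_mat (m i) (m i) \<and> q i \<in> carrier_mat (m i) (m i) \<and>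
            s i \<in> carrier_mat (n i) (n i) \<and> t i \<in> carrier_mat (n i) (n i) \<and>
            M i = p i * q i - q i * p i \<and>
            N i = s i * t i - t i * s i \<and>
            invertible_mat (kron (p i) (1\<^sub>m (n i)) - kron (1\<^sub>m (m i)) (transpose_mat (s i))) \<and>
            invertible_mat (kron (q (i + 1)) (1\<^sub>m (m i)) - kron (1\<^sub>m (m (i + 1))) (transpose_mat (q i))) \<and>
            invertible_mat (kron (s i) (1\<^sub>m (m (i + 1))) - kron (1\<^sub>m (n i)) (transpose_mat (p (i + 1))))"
proof -
  note inf = assms(1)
  have cM: "\<forall>i. \<exists>pq. fst pq \<in> carrier_mat (m i) (m i) \<and> snd pq \<in> carrier_mat (m i) (m i)
      \<and> M i = fst pq * snd pq - snd pq * fst pq"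
  proof
    fix i
    have "comm (m i) (M i)" by (rule comm_exists[OF inf]) (use assms(2) in auto)
    then obtain a b where "a \<in> carrier_mat (m i) (m i)" "b \<in> carrier_mat (m i) (m i)" "M i = a * b - b * a"
      unfolding comm_def by auto
    then show "\<exists>pq. fst pq \<in> carrier_mat (m i) (m i) \<and> snd pq \<in> carrier_mat (m i) (m i)
      \<and> M i = fst pq * snd pq - snd pq * fst pq" by (intro exI[of _ "(a,b)"]) simp
  qed
  from choice[OF cM] obtain f where f: "\<forall>i. fst (f i) \<in> carrier_mat (m i) (m i) \<and> snd (f i) \<in> carrier_mat (m i) (m i)
      \<and> M i = fst (f i) * snd (f i) - snd (f i) * fst (f i)" by blast
  have cN: "\<forall>i. \<exists>pq. fst pq \<in> carrier_mat (n i) (n i) \<and> snd pq \<in> carrier_mat (n i) (n i)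
      \<and> N i = fst pq * snd pq - snd pq * fst pq"
  proof
    fix i
    have "comm (n i) (N i)" by (rule comm_exists[OF inf]) (use assms(3) in auto)
    then obtain a b where "a \<in> carrier_mat (n i) (n i)" "b \<in> carrier_mat (n i) (n i)" "N i = a * b - b * a"
      unfolding comm_def by auto
    then show "\<exists>pq. fst pq \<in> carrier_mat (n i) (n i) \<and> snd pq \<in> carrier_mat (n i) (n i)
      \<and> N i = fst pq * snd pq - snd pq * fst pq" by (intro exI[of _ "(a,b)"]) simp
  qed
  from choice[OF cN] obtain g where g: "\<forall>i. fst (g i) \<in> carrier_mat (n i) (n i) \<and> snd (g i) \<in> carrier_mat (n i) (n i)
      \<and> N i = fst (g i) * snd (g i) - snd (g i) * fst (g i)" by blast
  define p0 where "p0 i = fst (f i)" for i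
  define q0 where "q0 i = snd (f i)" for i
  define s0 where "s0 i = fst (g i)" for i
  define t0 where "t0 i = snd (g i)" for i
  have p0: "\<And>i. p0 i \<in> carrier_mat (m i) (m i)" and q0: "\<And>i. q0 i \<in> carrier_mat (m i) (m i)"
    and s0: "\<And>i. s0 i \<in> carrier_mat (n i) (n i)" and t0: "\<And>i. t0 i \<in> carrier_mat (n i) (n i)"
    and Mi: "\<And>i. M i = p0 i * q0 i - q0 i * p0 i" and Ni: "\<And>i. N i = s0 i * t0 i - t0 i * s0 i"
    using f g unfolding p0_def q0_def s0_def t0_def by auto
  define K3 where "K3 i = kron (p0 i) (1\<^sub>m (n i)) - kron (1\<^sub>m (m i)) (transpose_mat (s0 i))" for i
  define K4 where "K4 i = kron (q0 (i + 1)) (1\<^sub>m (m i)) - kron (1\<^sub>m (m (i + 1))) (transpose_mat (q0 i))" for i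
  define K5 where "K5 i = kron (s0 i) (1\<^sub>m (m (i + 1))) - kron (1\<^sub>m (n i)) (transpose_mat (p0 (i + 1)))" for i
  have K3: "K3 i \<in> carrier_mat (m i * n i) (m i * n i)" for i
    unfolding K3_def using p0[of i] s0[of i] by (auto simp: kron_def)
  have K4: "K4 i \<in> carrier_mat (m (i + 1) * m i) (m (i + 1) * m i)" for i
    unfolding K4_def using q0[of i] q0[of "i+1"] by (auto simp: kron_def)
  have K5: "K5 i \<in> carrier_mat (n i * m (i + 1)) (n i * m (i + 1))" for i
    unfolding K5_def using s0[of i] p0[of "i+1"] by (auto simp: kron_def)
  define B3 where "B3 i = {e. det (K3 i + e \<cdot>\<^sub>m 1\<^sub>m (m i * n i)) = 0}" for i
  define B4 where "B4 i = {e. det (K4 i + e \<cdot>\<^sub>m 1\<^sub>m (m (i + 1) * m i)) = 0}" for i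
  define B5 where "B5 i = {e. det (K5 i + e \<cdot>\<^sub>m 1\<^sub>m (n i * m (i + 1))) = 0}" for i
  have fB3: "finite (B3 i)" for i unfolding B3_def by (rule finite_bad[OF K3])
  have fB4: "finite (B4 i)" for i unfolding B4_def by (rule finite_bad[OF K4])
  have fB5: "finite (B5 i)" for i unfolding B5_def by (rule finite_bad[OF K5])
  define F where "F j = (if even j then uminus ` B3 (j div 2) else uminus ` B5 (j div 2))" for j :: int
  have fF: "finite (F j)" for j unfolding F_def using fB3 fB5 by auto
  obtain y where y: "\<And>j. y (j + 1) - y j \<notin> F j" using chain[of F, OF inf fF] by blast
  obtain \<beta> where \<beta>: "\<And>j. \<beta> (j + 1) - \<beta> j \<notin> B4 j" using chain[of B4, OF inf fB4] by blast
  define \<alpha> where "\<alpha> i = y (2 * i)" for i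
  define \<gamma> where "\<gamma> i = y (2 * i + 1)" for i
  have F3: "F (2 * i) = uminus ` B3 i" for i unfolding F_def by simp
  have F5: "F (2 * i + 1) = uminus ` B5 i" for i unfolding F_def by simp
  have a3: "\<alpha> i - \<gamma> i \<notin> B3 i" for i
  proof -
    have "y (2 * i + 1) - y (2 * i) \<notin> uminus ` B3 i" using y[of "2 * i"] unfolding F3 .
    then show ?thesis unfolding \<alpha>_def \<gamma>_def by (rule neg_notin)
  qed
  have a5: "\<gamma> i - \<alpha> (i + 1) \<notin> B5 i" for i
  proof -
    have "y (2 * i + 1 + 1) - y (2 * i + 1) \<notin> uminus ` B5 i" using y[of "2 * i + 1"] unfolding F5 .
    moreover have "2 * (i + 1) = 2 * i + 1 + 1" by simp
    ultimately have "y (2 * (i + 1)) - y (2 * i + 1) \<notin> uminus ` B5 i" by metis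
    then show ?thesis unfolding \<alpha>_def \<gamma>_def by (rule neg_notin)
  qed
  define p where "p i = p0 i + \<alpha> i \<cdot>\<^sub>m 1\<^sub>m (m i)" for i
  define q where "q i = q0 i + \<beta> i \<cdot>\<^sub>m 1\<^sub>m (m i)" for i
  define s where "s i = s0 i + \<gamma> i \<cdot>\<^sub>m 1\<^sub>m (n i)" for i
  define t where "t i = t0 i + 0 \<cdot>\<^sub>m 1\<^sub>m (n i)" for i
  have "\<forall>i.
            p i \<in> carrier_mat (m i) (m i) \<and> q i \<in> carrier_mat (m i) (m i) \<and>
            s i \<in> carrier_mat (n i) (n i) \<and> t i \<in> carrier_mat (n i) (n i) \<and>
            M i = p i * q i - q i * p i \<and>
            N i = s i * t i - t i * s i \<and>
            invertible_mat (kron (p i) (1\<^sub>m (n i)) - kron (1\<^sub>m (m i)) (transpose_mat (s i))) \<and>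
            invertible_mat (kron (q (i + 1)) (1\<^sub>m (m i)) - kron (1\<^sub>m (m (i + 1))) (transpose_mat (q i))) \<and>
            invertible_mat (kron (s i) (1\<^sub>m (m (i + 1))) - kron (1\<^sub>m (n i)) (transpose_mat (p (i + 1))))"
  proof (intro allI conjI)
    fix i
    show "p i \<in> carrier_mat (m i) (m i)" "q i \<in> carrier_mat (m i) (m i)"
      "s i \<in> carrier_mat (n i) (n i)" "t i \<in> carrier_mat (n i) (n i)"
      unfolding p_def q_def s_def t_def using p0[of i] q0[of i] s0[of i] t0[of i] by auto
    show "M i = p i * q i - q i * p i"
      unfolding p_def q_def Mi comm_shift[OF p0 q0] ..
    show "N i = s i * t i - t i * s i"
      unfolding s_def t_def Ni comm_shift[OF s0 t0] ..
    have "kron (p i) (1\<^sub>m (n i)) - kron (1\<^sub>m (m i)) (transpose_mat (s i)) = K3 i + (\<alpha> i - \<gamma> i) \<cdot>\<^sub>m 1\<^sub>m (m i * n i)"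
      unfolding p_def s_def K3_def by (rule kron_shift[OF p0 s0])
    then show "invertible_mat (kron (p i) (1\<^sub>m (n i)) - kron (1\<^sub>m (m i)) (transpose_mat (s i)))"
      using inv_notbad[OF K3 a3[unfolded B3_def]] by simp
    have "kron (q (i + 1)) (1\<^sub>m (m i)) - kron (1\<^sub>m (m (i + 1))) (transpose_mat (q i)) = K4 i + (\<beta> (i + 1) - \<beta> i) \<cdot>\<^sub>m 1\<^sub>m (m (i + 1) * m i)"
      unfolding q_def K4_def by (rule kron_shift[OF q0 q0])
    then show "invertible_mat (kron (q (i + 1)) (1\<^sub>m (m i)) - kron (1\<^sub>m (m (i + 1))) (transpose_mat (q i)))"
      using inv_notbad[OF K4 \<beta>[unfolded B4_def]] by simp
    have "kron (s i) (1\<^sub>m (m (i + 1))) - kron (1\<^sub>m (n i)) (transpose_mat (p (i + 1))) = K5 i + (\<gamma> i - \<alpha> (i + 1)) \<cdot>\<^sub>m 1\<^sub>m (n i * m (i + 1))"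
      unfolding s_def p_def K5_def by (rule kron_shift[OF s0 p0])
    then show "invertible_mat (kron (s i) (1\<^sub>m (m (i + 1))) - kron (1\<^sub>m (n i)) (transpose_mat (p (i + 1))))"
      using inv_notbad[OF K5 a5[unfolded B5_def]] by simp
  qed
  then show ?thesis by (intro exI[of _ p] exI[of _ q] exI[of _ s] exI[of _ t])
qed

end
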